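(* Let $X$ and $Y$ be non-negative absolutely continuous random variables with PDFs $f$ and $g$. Let $r>0$, $r\ne1$, $0<\alpha<\infty$, $\alpha\ne1$, $\beta>0$. Let $Y_{E,r}$ be the generalized escort random variable with PDF $\frac{f^r(x)g^{1-r}(x)}{\int_0^\infty f^r(t)g^{1-r}(t)\,dt}$, $x>0$, and let $X_{e,\alpha}$, $Y_{e,\alpha}$ be the escort random variables with PDFs $\frac{f^\alpha(x)}{\int_0^\infty f^\alpha(t)dt}$ and $\frac{g^\alpha(x)}{\int_0^\infty g^\alpha(t)dt}$, respectively. Then $$R^\alpha_\beta(Y_{E,r})\,RD^r_{\alpha\beta-\alpha+1}(X,Y)=(1-\alpha)\,R^\alpha_{r\beta-r+1}(X)\,R^\alpha_{(1-r)(\beta-1)+1}(Y)\,RD^r_\beta(X_{e,\alpha},Y_{e,\alpha}).$$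
   Context: For a non-negative absolutely continuous random variable $Z$ with PDF $h$, the Rényi information generating function is $R^a_b(Z)=\frac{1}{1-a}\left(\int_0^\infty h^a(x)\,dx\right)^{b-1}$ ($a>0$, $a\ne1$, $b>0$). For non-negative absolutely continuous random variables $U,V$ with PDFs $u,v$, the Rényi divergence information generating function is $RD^a_b(U,V)=\frac{1}{a-1}\left(\int_0^\infty u^a(x)v^{1-a}(x)\,dx\right)^{b-1}$ ($a>0$, $a\ne1$, $b>0$). All integrals are assumed to exist, be finite and positive. *)

theory Defs
  imports "HOL-Analysis.Analysis"
begin

text \<open>Random variables are represented by their PDFs h :: real \<Rightarrow> real on [0,\<infinity>).\<close>

definition is_pdf :: "(real \<Rightarrow> real) \<Rightarrow> bool" where
  "is_pdf h \<longleftrightarrow> (\<forall>x. 0 \<le> h x) \<and> h integrable_on {0..} \<and> integral {0..} h = 1"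

definition renyi_igf :: "real \<Rightarrow> real \<Rightarrow> (real \<Rightarrow> real) \<Rightarrow> real" where
  "renyi_igf a b h = 1 / (1 - a) * (integral {0..} (\<lambda>x. h x powr a)) powr (b - 1)"

definition renyi_div_igf :: "real \<Rightarrow> real \<Rightarrow> (real \<Rightarrow> real) \<Rightarrow> (real \<Rightarrow> real) \<Rightarrow> real" where
  "renyi_div_igf a b u v =
     1 / (a - 1) * (integral {0..} (\<lambda>x. u x powr a * v x powr (1 - a))) powr (b - 1)"

definition escort_pdf :: "real \<Rightarrow> (real \<Rightarrow> real) \<Rightarrow> real \<Rightarrow> real" where
  "escort_pdf a f = (\<lambda>x. f x powr a / integral {0..} (\<lambda>t. f t powr a))"

definition gen_escort_pdf :: "real \<Rightarrow> (real \<Rightarrow> real) \<Rightarrow> (real \<Rightarrow> real) \<Rightarrow> real \<Rightarrow> real" where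
  "gen_escort_pdf r f g = (\<lambda>x. f x powr r * g x powr (1 - r) /
       integral {0..} (\<lambda>t. f t powr r * g t powr (1 - r)))"

end

theory Submission
  imports Defs
begin

theorem proposition3p2:
  fixes f g :: "real \<Rightarrow> real" and r \<alpha> \<beta> :: real
  assumes pdf_f: "is_pdf f" and pdf_g: "is_pdf g"
    and r: "r > 0" "r \<noteq> 1"
    and \<alpha>: "\<alpha> > 0" "\<alpha> \<noteq> 1"
    and \<beta>: "\<beta> > 0"
    and int_fa: "(\<lambda>x. f x powr \<alpha>) integrable_on {0..}"
    and pos_fa: "integral {0..} (\<lambda>x. f x powr \<alpha>) > 0"
    and int_ga: "(\<lambda>x. g x powr \<alpha>) integrable_on {0..}"
    and pos_ga: "integral {0..} (\<lambda>x. g x powr \<alpha>) > 0"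
    and int_fg: "(\<lambda>x. f x powr r * g x powr (1 - r)) integrable_on {0..}"
    and pos_fg: "integral {0..} (\<lambda>x. f x powr r * g x powr (1 - r)) > 0"
    and int_E: "(\<lambda>x. gen_escort_pdf r f g x powr \<alpha>) integrable_on {0..}"
    and pos_E: "integral {0..} (\<lambda>x. gen_escort_pdf r f g x powr \<alpha>) > 0"
    and int_e: "(\<lambda>x. escort_pdf \<alpha> f x powr r * escort_pdf \<alpha> g x powr (1 - r)) integrable_on {0..}"
    and pos_e: "integral {0..} (\<lambda>x. escort_pdf \<alpha> f x powr r * escort_pdf \<alpha> g x powr (1 - r)) > 0"
  shows "renyi_igf \<alpha> \<beta> (gen_escort_pdf r f g) * renyi_div_igf r (\<alpha> * \<beta> - \<alpha> + 1) f g
       = (1 - \<alpha>) * renyi_igf \<alpha> (r * \<beta> - r + 1) f * renyi_igf \<alpha> ((1 - r) * (\<beta> - 1) + 1) g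
         * renyi_div_igf r \<beta> (escort_pdf \<alpha> f) (escort_pdf \<alpha> g)"
proof -
  define A where "A = integral {0..} (\<lambda>x. f x powr \<alpha>)"
  define B where "B = integral {0..} (\<lambda>x. g x powr \<alpha>)"
  define C where "C = integral {0..} (\<lambda>x. f x powr r * g x powr (1 - r))"
  define h where "h = (\<lambda>x. f x powr (r * \<alpha>) * g x powr ((1 - r) * \<alpha>))"
  define E where "E = integral {0..} h"
  have A: "A > 0" and B: "B > 0" and C: "C > 0" using pos_fa pos_ga pos_fg A_def B_def C_def by auto
  have f0: "\<And>x. f x \<ge> 0" and g0: "\<And>x. g x \<ge> 0" using pdf_f pdf_g by (auto simp: is_pdf_def)
  have p1: "gen_escort_pdf r f g x powr \<alpha> = h x / C powr \<alpha>" for x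
  proof -
    have "gen_escort_pdf r f g x powr \<alpha> = (f x powr r * g x powr (1 - r)) powr \<alpha> / C powr \<alpha>"
      unfolding gen_escort_pdf_def C_def[symmetric] using f0[of x] g0[of x] C
      by (simp add: powr_divide)
    also have "\<dots> = h x / C powr \<alpha>"
      unfolding h_def using f0[of x] g0[of x] by (simp add: powr_mult powr_powr)
    finally show ?thesis .
  qed
  have p2: "escort_pdf \<alpha> f x powr r * escort_pdf \<alpha> g x powr (1 - r) = h x / (A powr r * B powr (1 - r))" for x
  proof -
    have "escort_pdf \<alpha> f x powr r * escort_pdf \<alpha> g x powr (1 - r)
       = (f x powr \<alpha>) powr r / A powr r * ((g x powr \<alpha>) powr (1 - r) / B powr (1 - r))"
      unfolding escort_pdf_def A_def[symmetric] B_def[symmetric] using f0[of x] g0[of x] A B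
      by (simp add: powr_divide)
    also have "\<dots> = h x / (A powr r * B powr (1 - r))"
      unfolding h_def by (simp add: powr_powr mult.commute)
    finally show ?thesis .
  qed
  have I1: "integral {0..} (\<lambda>x. gen_escort_pdf r f g x powr \<alpha>) = E / C powr \<alpha>"
    unfolding p1 E_def by simp
  have I2: "integral {0..} (\<lambda>x. escort_pdf \<alpha> f x powr r * escort_pdf \<alpha> g x powr (1 - r))
      = E / (A powr r * B powr (1 - r))"
    unfolding p2 E_def by simp
  have E: "E > 0" using pos_E I1 C by (simp add: divide_pos_pos zero_less_divide_iff)
  have ne1: "1 - \<alpha> \<noteq> 0" "r - 1 \<noteq> 0" using \<alpha> r by auto
  have L: "renyi_igf \<alpha> \<beta> (gen_escort_pdf r f g) * renyi_div_igf r (\<alpha> * \<beta> - \<alpha> + 1) f g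
     = E powr (\<beta> - 1) / ((1 - \<alpha>) * (r - 1))"
  proof -
    have "renyi_igf \<alpha> \<beta> (gen_escort_pdf r f g) * renyi_div_igf r (\<alpha> * \<beta> - \<alpha> + 1) f g
      = 1 / (1 - \<alpha>) * (E powr (\<beta> - 1) / C powr (\<alpha> * (\<beta> - 1))) * (1 / (r - 1) * C powr (\<alpha> * (\<beta> - 1)))"
      unfolding renyi_igf_def renyi_div_igf_def I1 C_def[symmetric] using E C
      by (simp add: powr_divide powr_powr algebra_simps)
    also have "\<dots> = E powr (\<beta> - 1) / ((1 - \<alpha>) * (r - 1))"
    proof -
      have "C powr (\<alpha> * (\<beta> - 1)) > 0" using C by simp
      moreover have "\<And>p e::real. p > 0 \<Longrightarrow> 1 / (1 - \<alpha>) * (e / p) * (1 / (r - 1) * p) = e / ((1 - \<alpha>) * (r - 1))"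
        using ne1 by (simp add: divide_simps)
      ultimately show ?thesis by blast
    qed
    finally show ?thesis .
  qed
  have R: "(1 - \<alpha>) * renyi_igf \<alpha> (r * \<beta> - r + 1) f * renyi_igf \<alpha> ((1 - r) * (\<beta> - 1) + 1) g
         * renyi_div_igf r \<beta> (escort_pdf \<alpha> f) (escort_pdf \<alpha> g)
     = E powr (\<beta> - 1) / ((1 - \<alpha>) * (r - 1))"
  proof -
    have "(1 - \<alpha>) * renyi_igf \<alpha> (r * \<beta> - r + 1) f * renyi_igf \<alpha> ((1 - r) * (\<beta> - 1) + 1) g
         * renyi_div_igf r \<beta> (escort_pdf \<alpha> f) (escort_pdf \<alpha> g)
      = (1 - \<alpha>) * (1 / (1 - \<alpha>) * A powr (r * (\<beta> - 1))) * (1 / (1 - \<alpha>) * B powr ((1 - r) * (\<beta> - 1)))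
        * (1 / (r - 1) * (E powr (\<beta> - 1) / (A powr (r * (\<beta> - 1)) * B powr ((1 - r) * (\<beta> - 1)))))"
      unfolding renyi_igf_def renyi_div_igf_def I2 A_def[symmetric] B_def[symmetric] using E A B
      by (simp add: powr_divide powr_mult powr_powr algebra_simps)
    also have "\<dots> = E powr (\<beta> - 1) / ((1 - \<alpha>) * (r - 1))"
    proof -
      have "A powr (r * (\<beta> - 1)) > 0" "B powr ((1 - r) * (\<beta> - 1)) > 0" using A B by simp_all
      moreover have "\<And>p q e::real. p > 0 \<Longrightarrow> q > 0 \<Longrightarrow> (1 - \<alpha>) * (1 / (1 - \<alpha>) * p) * (1 / (1 - \<alpha>) * q)
        * (1 / (r - 1) * (e / (p * q))) = e / ((1 - \<alpha>) * (r - 1))"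
        using ne1 by (simp add: divide_simps)
      ultimately show ?thesis by blast
    qed
    finally show ?thesis .
  qed
  show ?thesis using L R by simp
qed

end
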